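(* Let $h_0>0$, $U>2h_0$, $|h|\le h_0$, and let $e,e'\in\mathscr B_\Lambda$ be distinct nearest-neighbour bonds. Then \[ P\Bigl(\mathrm{ad}_{\mathcal I_h((T_e)^{\rm off})}\bigl((T_{e'})^{\rm off}\bigr)\Bigr)^{\rm diag}P=0 . \]
   Context: $\Lambda=(\mathbb Z/L\mathbb Z)^d$, $L\in2\mathbb N$, $\mathscr B_\Lambda$ its unordered nearest-neighbour bonds. Fermionic Fock space over $\ell^2(\Lambda)\otimes\mathbb C^2$ with CAR operators $c_{x\sigma}$, $n_{x\sigma}=c^*_{x\sigma}c_{x\sigma}$, $n_x=n_{x\uparrow}+n_{x\downarrow}$; $\mathcal H^{\rm hf}_\Lambda=\ker(\sum_xn_x-|\Lambda|)$; $D_\Lambda=\sum_xn_{x\uparrow}n_{x\downarrow}$; $\eta_x=(-1)^{x_1+\dots+x_d}$; $M_\Lambda=\sum_x\eta_x\frac12(n_{x\uparrow}-n_{x\downarrow})$. All operators act on $\mathcal H^{\rm hf}_\Lambda$. $P$ is the projection onto $\ker D_\Lambda$ in $\mathcal H^{\rm hf}_\Lambda$ (singly occupied configurations). $P_m$ is the spectral projection of $D_\Lambda$ at eigenvalue $m$; $B^{(k)}=\sum_mP_{m+k}BP_m$, $B^{\rm diag}=B^{(0)}$, $B^{\rm off}=\sum_{k\ne0}B^{(k)}$. For $e=\{x,y\}$, $T_e=-t\sum_\sigma(c^*_{x\sigma}c_{y\sigma}+c^*_{y\sigma}c_{x\sigma})$ ($t\in\mathbb R$). For an operator $A$ supported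 on $X$ of grade $k\ne0$, $\mathcal I_h(A)=\frac1{kU}\sum_{n\ge0}(\frac h{kU})^n\mathrm{ad}^{\,n}_{M_\Lambda}(A)$ with $\mathrm{ad}_S(A)=[S,A]$, and $\mathcal I_h(T_e^{\rm off}):=\sum_{k\ne0}\mathcal I_h((T_e)^{(k)})$. *)

theory Defs
  imports Complex_Main
begin

text \<open>Operators on the fermionic Fock space are represented by their matrices
  in the occupation-number basis: a basis vector is a finite set S of occupied
  modes, and an operator A is the function (S, S') giving the matrix entry
  between S (row) and S' (column).\<close>

type_synonym op = "nat set \<Rightarrow> nat set \<Rightarrow> complex"

text \<open>Lattice Lambda = (Z/LZ)^d: sites are encoded as numbers x < L^d, the i-th
  coordinate being the i-th base-L digit.\<close>

definition sites :: "nat \<Rightarrow> nat \<Rightarrow> nat set" where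
  "sites d L = {..<L ^ d}"

definition coord :: "nat \<Rightarrow> nat \<Rightarrow> nat \<Rightarrow> nat" where
  "coord L x i = (x div L ^ i) mod L"

definition nn :: "nat \<Rightarrow> nat \<Rightarrow> nat \<Rightarrow> nat \<Rightarrow> bool" where
  "nn d L x y \<longleftrightarrow> x \<in> sites d L \<and> y \<in> sites d L \<and> x \<noteq> y \<and>
     (\<exists>i<d. (coord L y i = (coord L x i + 1) mod L \<or> coord L x i = (coord L y i + 1) mod L)
            \<and> (\<forall>j<d. j \<noteq> i \<longrightarrow> coord L y j = coord L x j))"

definition bonds :: "nat \<Rightarrow> nat \<Rightarrow> nat set set" where
  "bonds d L = {{x, y} | x y. nn d L x y}"

definition eta :: "nat \<Rightarrow> nat \<Rightarrow> nat \<Rightarrow> real" where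
  "eta d L x = (-1) ^ (\<Sum>i<d. coord L x i)"

text \<open>Modes (x, sigma): spin up = True. Encoded as natural numbers; this
  encoding fixes the ordering used in the Jordan-Wigner signs.\<close>
definition mode :: "nat \<Rightarrow> bool \<Rightarrow> nat" where
  "mode x \<sigma> = 2 * x + (if \<sigma> then 0 else 1)"

definition fock :: "nat \<Rightarrow> nat \<Rightarrow> nat set set" where
  "fock d L = Pow {..<2 * L ^ d}"

definition hf :: "nat \<Rightarrow> nat \<Rightarrow> nat set set" where
  "hf d L = {S \<in> fock d L. card S = L ^ d}"

definition mmult :: "nat set set \<Rightarrow> op \<Rightarrow> op \<Rightarrow> op" where
  "mmult B A C = (\<lambda>S S'. \<Sum>R\<in>B. A S R * C R S')"

text \<open>Annihilation and creation operators (CAR, Jordan-Wigner sign).\<close>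
definition ann :: "nat \<Rightarrow> op" where
  "ann m = (\<lambda>S S'. if m \<in> S' \<and> S = S' - {m} then (-1) ^ card {k\<in>S'. k < m} else 0)"

definition cre :: "nat \<Rightarrow> op" where
  "cre m = (\<lambda>S S'. cnj (ann m S' S))"

definition num :: "nat \<Rightarrow> nat \<Rightarrow> nat \<Rightarrow> op" where
  "num d L m = mmult (fock d L) (cre m) (ann m)"

definition Dop :: "nat \<Rightarrow> nat \<Rightarrow> op" where
  "Dop d L = (\<lambda>S S'. \<Sum>x\<in>sites d L.
      mmult (fock d L) (num d L (mode x True)) (num d L (mode x False)) S S')"

definition Mop :: "nat \<Rightarrow> nat \<Rightarrow> op" where
  "Mop d L = (\<lambda>S S'. \<Sum>x\<in>sites d L. of_real (eta d L x) * (1/2) *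
      (num d L (mode x True) S S' - num d L (mode x False) S S'))"

text \<open>Spectral projection of D at eigenvalue m (D is diagonal in the
  occupation basis).  P = Pm d L 0 is the projection onto ker D.\<close>
definition Pm :: "nat \<Rightarrow> nat \<Rightarrow> int \<Rightarrow> op" where
  "Pm d L m = (\<lambda>S S'. if S = S' \<and> Dop d L S S = of_int m then 1 else 0)"

text \<open>B^(k) = sum_m P_(m+k) B P_m; the spectrum of D lies in {0..|Lambda|}.\<close>
definition grade :: "nat \<Rightarrow> nat \<Rightarrow> int \<Rightarrow> op \<Rightarrow> op" where
  "grade d L k B = (\<lambda>S S'. \<Sum>m\<in>{0..int (L ^ d)}.
      mmult (fock d L) (mmult (fock d L) (Pm d L (m + k)) B) (Pm d L m) S S')"

definition offp :: "nat \<Rightarrow> nat \<Rightarrow> op \<Rightarrow> op" where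
  "offp d L B = (\<lambda>S S'. \<Sum>k\<in>{- int (L ^ d)..int (L ^ d)} - {0}. grade d L k B S S')"

definition ad :: "nat \<Rightarrow> nat \<Rightarrow> op \<Rightarrow> op \<Rightarrow> op" where
  "ad d L A B = (\<lambda>S S'. mmult (fock d L) A B S S' - mmult (fock d L) B A S S')"

text \<open>Hopping on a bond e: T_e = -t sum_sigma (c*_x c_y + c*_y c_x), written as
  a sum over the two ordered pairs of distinct endpoints.\<close>
definition Tb :: "nat \<Rightarrow> nat \<Rightarrow> real \<Rightarrow> nat set \<Rightarrow> op" where
  "Tb d L t e = (\<lambda>S S'. - of_real t * (\<Sum>\<sigma>\<in>(UNIV::bool set).
      \<Sum>(a, b)\<in>{(a, b). a \<in> e \<and> b \<in> e \<and> a \<noteq> b}.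
        mmult (fock d L) (cre (mode a \<sigma>)) (ann (mode b \<sigma>)) S S'))"

text \<open>I_h(A) for A of grade k (the series taken entrywise).\<close>
definition Ik :: "nat \<Rightarrow> nat \<Rightarrow> real \<Rightarrow> real \<Rightarrow> int \<Rightarrow> op \<Rightarrow> op" where
  "Ik d L h U k A = (\<lambda>S S'. (1 / (of_int k * of_real U)) *
      (\<Sum>n. (of_real h / (of_int k * of_real U)) ^ n * ((ad d L (Mop d L)) ^^ n) A S S'))"

text \<open>I_h(B^off) := sum over k /= 0 of I_h(B^(k)) (only |k| <= |Lambda| can be nonzero).\<close>
definition Ioff :: "nat \<Rightarrow> nat \<Rightarrow> real \<Rightarrow> real \<Rightarrow> op \<Rightarrow> op" where
  "Ioff d L h U B = (\<lambda>S S'. \<Sum>k\<in>{- int (L ^ d)..int (L ^ d)} - {0}.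
      Ik d L h U k (grade d L k B) S S')"

end

theory Submission
  imports Defs
begin

definition diagop :: "op \<Rightarrow> bool" where
  "diagop X \<longleftrightarrow> (\<forall>S Q. X S Q \<noteq> 0 \<longrightarrow> Q = S)"

lemma sandwich_zero:
  assumes "diagop X" "diagop Y" "X S S = 0 \<or> B S S' = 0 \<or> Y S' S' = 0"
  shows "mmult A (mmult A X B) Y S S' = 0"
  unfolding mmult_def
proof (rule sum.neutral, rule ballI)
  fix R assume "R \<in> A"
  show "(\<Sum>Q\<in>A. X S Q * B Q R) * Y R S' = 0"
  proof (cases "Y R S' = 0")
    case False
    then have R: "R = S'" using assms(2) unfolding diagop_def by blast
    have "(\<Sum>Q\<in>A. X S Q * B Q R) * Y R S' = (\<Sum>Q\<in>A. X S Q * B Q R * Y R S')"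
      by (simp add: sum_distrib_right)
    also have "\<dots> = 0"
    proof (rule sum.neutral, rule ballI)
      fix Q assume "Q \<in> A"
      show "X S Q * B Q R * Y R S' = 0"
      proof (cases "X S Q = 0")
        case False
        then have "Q = S" using assms(1) unfolding diagop_def by blast
        then show ?thesis using assms(3) R by auto
      qed simp
    qed
    finally show ?thesis .
  qed simp
qed

lemma Pm_diag: "diagop (Pm d L m)"
  unfolding diagop_def Pm_def by auto

lemma num_diag: "diagop (num d L m)"
  unfolding diagop_def num_def mmult_def cre_def ann_def
proof (intro allI impI)
  fix S Q
  assume "(\<Sum>R\<in>fock d L. cnj (if m \<in> S \<and> R = S - {m} then (- 1) ^ card {k \<in> S. k < m} else 0) *
            (if m \<in> Q \<and> R = Q - {m} then (- 1) ^ card {k \<in> Q. k < m} else 0)) \<noteq> 0"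
  then obtain R where "(cnj (if m \<in> S \<and> R = S - {m} then (- 1) ^ card {k \<in> S. k < m} else 0) *
            (if m \<in> Q \<and> R = Q - {m} then (- 1) ^ card {k \<in> Q. k < m} else 0)) \<noteq> (0::complex)"
    by (meson sum.not_neutral_contains_not_neutral)
  then have "m \<in> S" "m \<in> Q" "S - {m} = Q - {m}" by (auto split: if_splits)
  then show "Q = S" by blast
qed

lemma Mop_diag: "diagop (Mop d L)"
  unfolding diagop_def
proof (intro allI impI)
  fix S Q assume "Mop d L S Q \<noteq> 0"
  then obtain x where "num d L (mode x True) S Q \<noteq> 0 \<or> num d L (mode x False) S Q \<noteq> 0"
    unfolding Mop_def by (metis (no_types, lifting) diff_self mult_zero_right sum.neutral)
  then show "Q = S" using num_diag unfolding diagop_def by blast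
qed

lemma ad_zero:
  assumes "diagop M" "B X Y = 0"
  shows "ad d L M B X Y = 0"
proof -
  have 1: "mmult (fock d L) M B X Y = 0"
    unfolding mmult_def
  proof (rule sum.neutral, rule ballI)
    fix R show "M X R * B R Y = 0" using assms unfolding diagop_def by (cases "M X R = 0") auto
  qed
  have 2: "mmult (fock d L) B M X Y = 0"
    unfolding mmult_def
  proof (rule sum.neutral, rule ballI)
    fix R show "B X R * M R Y = 0" using assms unfolding diagop_def by (cases "M R Y = 0") auto
  qed
  show ?thesis unfolding ad_def using 1 2 by simp
qed

lemma adpow_zero:
  assumes "A X Y = 0"
  shows "((ad d L (Mop d L)) ^^ n) A X Y = 0"
  by (induction n) (auto simp: assms ad_zero Mop_diag)

lemma grade_zero: "B X Y = 0 \<Longrightarrow> grade d L k B X Y = 0"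
  unfolding grade_def by (rule sum.neutral) (auto intro!: sandwich_zero Pm_diag)

lemma offp_zero: "B X Y = 0 \<Longrightarrow> offp d L B X Y = 0"
  unfolding offp_def by (rule sum.neutral) (auto simp: grade_zero)

lemma Ik_zero: "A X Y = 0 \<Longrightarrow> Ik d L h U k A X Y = 0"
  unfolding Ik_def by (simp add: adpow_zero)

lemma Ioff_zero: "B X Y = 0 \<Longrightarrow> Ioff d L h U B X Y = 0"
  unfolding Ioff_def by (rule sum.neutral) (auto simp: grade_zero Ik_zero)


definition hop :: "nat set \<Rightarrow> nat set \<Rightarrow> nat set \<Rightarrow> bool" where
  "hop e X Y \<longleftrightarrow> (\<exists>\<sigma> a b. a \<in> e \<and> b \<in> e \<and> a \<noteq> b \<and> mode a \<sigma> \<in> X \<and> mode b \<sigma> \<in> Y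
      \<and> X - {mode a \<sigma>} = Y - {mode b \<sigma>})"

lemma mode_inj: "mode x \<sigma> = mode y \<tau> \<longleftrightarrow> x = y \<and> \<sigma> = \<tau>"
  unfolding mode_def apply (cases \<sigma>; cases \<tau>) apply simp_all by presburger+

lemma Tb_hop:
  assumes "Tb d L t e X Y \<noteq> 0"
  shows "hop e X Y"
proof -
  from assms obtain \<sigma> where "(\<Sum>(a, b)\<in>{(a, b). a \<in> e \<and> b \<in> e \<and> a \<noteq> b}.
        mmult (fock d L) (cre (mode a \<sigma>)) (ann (mode b \<sigma>)) X Y) \<noteq> 0"
    unfolding Tb_def by (metis (no_types, lifting) mult_zero_right sum.neutral)
  then obtain p where p: "p \<in> {(a, b). a \<in> e \<and> b \<in> e \<and> a \<noteq> b}"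
     "(case p of (a, b) \<Rightarrow> mmult (fock d L) (cre (mode a \<sigma>)) (ann (mode b \<sigma>)) X Y) \<noteq> 0"
    by (meson sum.not_neutral_contains_not_neutral)
  obtain a b where ab: "p = (a, b)" by fastforce
  from p ab have abe: "a \<in> e" "b \<in> e" "a \<noteq> b" by auto
  from p ab have "mmult (fock d L) (cre (mode a \<sigma>)) (ann (mode b \<sigma>)) X Y \<noteq> 0" by simp
  then obtain Q where "cre (mode a \<sigma>) X Q * ann (mode b \<sigma>) Q Y \<noteq> 0"
    unfolding mmult_def by (meson sum.not_neutral_contains_not_neutral)
  then have "mode a \<sigma> \<in> X" "mode b \<sigma> \<in> Y" "X - {mode a \<sigma>} = Y - {mode b \<sigma>}"
    unfolding cre_def ann_def by (auto split: if_splits)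
  then show ?thesis unfolding hop_def using abe by blast
qed

lemma num_fock:
  assumes "S \<in> fock d L"
  shows "num d L m S R = (if m \<in> S \<and> R = S then 1 else 0)"
proof (cases "m \<in> S \<and> R = S")
  case True
  have "num d L m S R = (\<Sum>Q\<in>fock d L. if Q = S - {m} then 1 else 0)"
    unfolding num_def mmult_def
  proof (rule sum.cong[OF refl])
    fix Q
    show "cre m S Q * ann m Q R = (if Q = S - {m} then 1 else 0)"
      using True unfolding cre_def ann_def
      by (auto simp flip: power_add simp: mult_2[symmetric] power_mult)
  qed
  also have "\<dots> = 1" using assms unfolding fock_def by auto
  finally show ?thesis using True by simp
next
  case False
  have "num d L m S R = 0"
    unfolding num_def mmult_def
    by (rule sum.neutral) (use False in \<open>auto simp: cre_def ann_def\<close>)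
  then show ?thesis using False by simp
qed

lemma fin_fock[simp]: "finite (fock d L)"
  unfolding fock_def by simp

lemma Dop_zero:
  assumes "S \<in> fock d L" "Dop d L S S = 0" "x < L ^ d"
  shows "\<not> (mode x True \<in> S \<and> mode x False \<in> S)"
proof -
  have "Dop d L S S = (\<Sum>x\<in>sites d L. of_nat (if mode x True \<in> S \<and> mode x False \<in> S then 1 else 0))"
    unfolding Dop_def
  proof (rule sum.cong[OF refl])
    fix x
    have "mmult (fock d L) (num d L (mode x True)) (num d L (mode x False)) S S
      = (\<Sum>R\<in>fock d L. if R = S then (if mode x True \<in> S \<and> mode x False \<in> S then 1 else 0) else 0)"
      unfolding mmult_def by (rule sum.cong[OF refl]) (auto simp: num_fock assms(1))
    also have "\<dots> = of_nat (if mode x True \<in> S \<and> mode x False \<in> S then 1 else 0)"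
      by (simp only: sum.delta fin_fock if_True assms(1)) simp
    finally show "mmult (fock d L) (num d L (mode x True)) (num d L (mode x False)) S S = 
      of_nat (if mode x True \<in> S \<and> mode x False \<in> S then 1 else 0)" .
  qed
  also have "\<dots> = of_nat (\<Sum>x\<in>sites d L. (if mode x True \<in> S \<and> mode x False \<in> S then 1 else 0))"
    by simp
  finally have "(\<Sum>x\<in>sites d L. (if mode x True \<in> S \<and> mode x False \<in> S then 1 else 0)) = (0::nat)"
    using assms(2) by (metis of_nat_eq_0_iff)
  then show ?thesis using assms(3) unfolding sites_def by (simp add: sum_eq_0_iff split: if_splits)
qed

lemma occupied:
  assumes "S \<in> hf d L" "\<And>x. x < L ^ d \<Longrightarrow> \<not> (mode x True \<in> S \<and> mode x False \<in> S)" "x < L ^ d"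
  shows "\<exists>\<rho>. mode x \<rho> \<in> S"
proof -
  have sub: "S \<subseteq> {..<2 * L ^ d}" and cS: "card S = L ^ d"
    using assms(1) unfolding hf_def fock_def by auto
  have m2: "mode y True = 2 * y" "mode y False = 2 * y + 1" for y unfolding mode_def by auto
  have inj: "inj_on (\<lambda>m. m div 2) S"
  proof (rule inj_onI)
    fix m m' assume mm: "m \<in> S" "m' \<in> S" "m div 2 = m' div 2"
    show "m = m'"
    proof (rule ccontr)
      assume "m \<noteq> m'"
      let ?y = "m div 2"
      have "?y < L ^ d" using mm sub by auto
      have q1: "m = 2 * ?y \<or> m = 2 * ?y + 1" by presburger
      have q2: "m' = 2 * ?y \<or> m' = 2 * ?y + 1" using mm(3) by presburger
      have "mode ?y True \<in> S \<and> mode ?y False \<in> S"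
        using q1 q2 mm(1,2) \<open>m \<noteq> m'\<close> m2 by auto
      then show False using assms(2) \<open>?y < L ^ d\<close> by blast
    qed
  qed
  have img: "(\<lambda>m. m div 2) ` S \<subseteq> {..<L ^ d}" using sub by auto
  have "card ((\<lambda>m. m div 2) ` S) = L ^ d" using card_image[OF inj] cS by simp
  then have "(\<lambda>m. m div 2) ` S = {..<L ^ d}"
    by (metis card_lessThan card_subset_eq finite_lessThan img)
  then obtain m where "m \<in> S" "m div 2 = x" using assms(3) by (metis imageE lessThan_iff)
  moreover have "m = 2 * x \<or> m = 2 * x + 1" using \<open>m div 2 = x\<close> by presburger
  ultimately show ?thesis using m2 by metis
qed


lemma core:
  assumes occS: "\<And>x. x < N \<Longrightarrow> \<exists>\<rho>. mode x \<rho> \<in> S"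
    and sglS: "\<And>x \<rho>. x < N \<Longrightarrow> mode x \<rho> \<in> S \<Longrightarrow> mode x (\<not>\<rho>) \<notin> S"
    and occS': "\<And>x. x < N \<Longrightarrow> \<exists>\<rho>. mode x \<rho> \<in> S'"
    and sglS': "\<And>x \<rho>. x < N \<Longrightarrow> mode x \<rho> \<in> S' \<Longrightarrow> mode x (\<not>\<rho>) \<notin> S'"
    and e: "e = {x1, y1}" "x1 \<noteq> y1" "x1 < N" "y1 < N"
    and e': "e' = {x2, y2}" "x2 \<noteq> y2" "x2 < N" "y2 < N"
    and h1: "hop e S R" and h2: "hop e' R S'"
  shows "e = e'"
proof -
  obtain \<sigma> a' b' where ab': "a' \<in> e'" "b' \<in> e'" "a' \<noteq> b'" "mode a' \<sigma> \<in> R" "mode b' \<sigma> \<in> S'"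
    "R - {mode a' \<sigma>} = S' - {mode b' \<sigma>}"
    using h2 unfolding hop_def by blast
  obtain \<tau> a b where ab: "a \<in> e" "b \<in> e" "a \<noteq> b" "mode a \<tau> \<in> S" "mode b \<tau> \<in> R"
    "S - {mode a \<tau>} = R - {mode b \<tau>}"
    using h1 unfolding hop_def by blast
  have aN: "a' < N" "b' < N" using ab' e' by auto
  have ne: "mode a' \<sigma> \<noteq> mode b' \<sigma>" using ab' mode_inj by blast
  have c1: "mode a' \<sigma> \<notin> S'"
  proof
    assume "mode a' \<sigma> \<in> S'"
    then have "mode a' \<sigma> \<in> S' - {mode b' \<sigma>}" using ne by blast
    then show False using ab'(6) by blast
  qed
  have c2: "mode a' (\<not>\<sigma>) \<in> S'"
  proof -
    obtain \<rho> where "mode a' \<rho> \<in> S'" using occS'[OF aN(1)] by blast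
    moreover have "\<rho> \<noteq> \<sigma>"
    proof
      assume "\<rho> = \<sigma>" then show False using c1 calculation by simp
    qed
    ultimately show ?thesis by (cases \<rho>; cases \<sigma>) auto
  qed
  have c3: "mode a' (\<not>\<sigma>) \<in> R"
  proof -
    have "mode a' (\<not>\<sigma>) \<noteq> mode b' \<sigma>" using ab'(3) mode_inj by blast
    then have "mode a' (\<not>\<sigma>) \<in> S' - {mode b' \<sigma>}" using c2 by blast
    then show ?thesis using ab'(6) by blast
  qed
  have c4: "mode b' \<rho> \<notin> R" for \<rho>
  proof
    assume r: "mode b' \<rho> \<in> R"
    have "mode b' \<rho> \<noteq> mode a' \<sigma>" using ab'(3) mode_inj by metis
    then have "mode b' \<rho> \<in> S' - {mode b' \<sigma>}" using r ab'(6) by blast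
    then have "mode b' \<rho> \<in> S'" "\<rho> \<noteq> \<sigma>" by (auto simp: mode_inj)
    then have "\<rho> = (\<not>\<sigma>)" by auto
    then show False using sglS'[OF aN(2) ab'(5)] \<open>mode b' \<rho> \<in> S'\<close> by simp
  qed
  obtain \<rho> where r: "mode b' \<rho> \<in> S" using occS[OF aN(2)] by blast
  have "mode b' \<rho> = mode a \<tau>"
  proof (rule ccontr)
    assume "mode b' \<rho> \<noteq> mode a \<tau>"
    then have "mode b' \<rho> \<in> R - {mode b \<tau>}" using r ab(6) by blast
    then show False using c4 by blast
  qed
  then have aa: "a = b'" using mode_inj by metis
  have "\<exists>\<rho>. mode a' \<rho> \<in> R \<and> mode a' \<rho> \<notin> S"
  proof (cases "mode a' \<sigma> \<in> S")
    case True
    then show ?thesis using sglS[OF aN(1) True] c3 by blast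
  next
    case False
    then show ?thesis using ab'(4) by blast
  qed
  then obtain \<rho>' where r': "mode a' \<rho>' \<in> R" "mode a' \<rho>' \<notin> S" by blast
  have "mode a' \<rho>' = mode b \<tau>"
  proof (rule ccontr)
    assume "mode a' \<rho>' \<noteq> mode b \<tau>"
    then have "mode a' \<rho>' \<in> S - {mode a \<tau>}" using r' ab(6) by blast
    then show False using r' by blast
  qed
  then have bb: "b = a'" using mode_inj by metis
  have "e = {a, b}" using e ab(1-3) by auto
  moreover have "e' = {a', b'}" using e' ab'(1-3) by auto
  ultimately show ?thesis using aa bb by auto
qed

lemma bond_split:
  assumes "e \<in> bonds d L"
  shows "\<exists>x y. e = {x, y} \<and> x \<noteq> y \<and> x < L ^ d \<and> y < L ^ d"
  using assms unfolding bonds_def nn_def sites_def by auto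


lemma good:
  assumes "S \<in> hf d L" "Dop d L S S = 0"
  shows "\<And>x. x < L ^ d \<Longrightarrow> \<exists>\<rho>. mode x \<rho> \<in> S"
    and "\<And>x \<rho>. x < L ^ d \<Longrightarrow> mode x \<rho> \<in> S \<Longrightarrow> mode x (\<not>\<rho>) \<notin> S"
proof -
  have F: "S \<in> fock d L" using assms(1) unfolding hf_def by auto
  have nd: "\<And>x. x < L ^ d \<Longrightarrow> \<not> (mode x True \<in> S \<and> mode x False \<in> S)"
    using Dop_zero[OF F assms(2)] by blast
  show "\<And>x. x < L ^ d \<Longrightarrow> \<exists>\<rho>. mode x \<rho> \<in> S" using occupied[OF assms(1) nd] by blast
  show "\<And>x \<rho>. x < L ^ d \<Longrightarrow> mode x \<rho> \<in> S \<Longrightarrow> mode x (\<not>\<rho>) \<notin> S"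
    using nd by (metis (full_types))
qed

theorem lemmaB1:
  fixes d L :: nat and t h0 U h :: real and e e' :: "nat set"
  assumes "even L" and "L \<ge> 2"
    and "h0 > 0" and "U > 2 * h0" and "\<bar>h\<bar> \<le> h0"
    and "e \<in> bonds d L" and "e' \<in> bonds d L" and "e \<noteq> e'"
  shows "\<forall>S\<in>hf d L. \<forall>S'\<in>hf d L.
    mmult (fock d L)
      (mmult (fock d L) (Pm d L 0)
         (grade d L 0 (ad d L (Ioff d L h U (Tb d L t e)) (offp d L (Tb d L t e')))))
      (Pm d L 0) S S' = 0"
proof (intro ballI)
  fix S S' assume S: "S \<in> hf d L" and S': "S' \<in> hf d L"
  obtain x1 y1 where e: "e = {x1, y1}" "x1 \<noteq> y1" "x1 < L ^ d" "y1 < L ^ d"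
    using bond_split[OF assms(6)] by blast
  obtain x2 y2 where e': "e' = {x2, y2}" "x2 \<noteq> y2" "x2 < L ^ d" "y2 < L ^ d"
    using bond_split[OF assms(7)] by blast
  let ?G = "grade d L 0 (ad d L (Ioff d L h U (Tb d L t e)) (offp d L (Tb d L t e')))"
  show "mmult (fock d L) (mmult (fock d L) (Pm d L 0) ?G) (Pm d L 0) S S' = 0"
  proof (cases "Dop d L S S = 0 \<and> Dop d L S' S' = 0")
    case False
    then have "Pm d L 0 S S = 0 \<or> Pm d L 0 S' S' = 0" unfolding Pm_def by auto
    then show ?thesis by (intro sandwich_zero Pm_diag) auto
  next
    case True
    note gS = good[OF S True[THEN conjunct1]]
    note gS' = good[OF S' True[THEN conjunct2]]
    have "ad d L (Ioff d L h U (Tb d L t e)) (offp d L (Tb d L t e')) S S' = 0"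
    proof -
      have 1: "mmult (fock d L) (Ioff d L h U (Tb d L t e)) (offp d L (Tb d L t e')) S S' = 0"
        unfolding mmult_def
      proof (rule sum.neutral, rule ballI)
        fix R
        show "Ioff d L h U (Tb d L t e) S R * offp d L (Tb d L t e') R S' = 0"
        proof (rule ccontr)
          assume "Ioff d L h U (Tb d L t e) S R * offp d L (Tb d L t e') R S' \<noteq> 0"
          then have "Tb d L t e S R \<noteq> 0" "Tb d L t e' R S' \<noteq> 0"
            using Ioff_zero offp_zero by fastforce+
          then have "hop e S R" "hop e' R S'" using Tb_hop by blast+
          then have "e = e'" using core[OF gS gS' e e'] by blast
          then show False using assms(8) by blast
        qed
      qed
      have 2: "mmult (fock d L) (offp d L (Tb d L t e')) (Ioff d L h U (Tb d L t e)) S S' = 0"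
        unfolding mmult_def
      proof (rule sum.neutral, rule ballI)
        fix R
        show "offp d L (Tb d L t e') S R * Ioff d L h U (Tb d L t e) R S' = 0"
        proof (rule ccontr)
          assume "offp d L (Tb d L t e') S R * Ioff d L h U (Tb d L t e) R S' \<noteq> 0"
          then have "Tb d L t e' S R \<noteq> 0" "Tb d L t e R S' \<noteq> 0"
            using Ioff_zero offp_zero by fastforce+
          then have "hop e' S R" "hop e R S'" using Tb_hop by blast+
          then have "e' = e" using core[OF gS gS' e' e] by blast
          then show False using assms(8) by blast
        qed
      qed
      show ?thesis unfolding ad_def using 1 2 by simp
    qed
    then have "?G S S' = 0" by (rule grade_zero)
    then show ?thesis by (intro sandwich_zero Pm_diag) auto
  qed
qed

end
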